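(* Let $A\subseteq\mathcal{R}$ be outer measurable and let $I$ be an interval in $\mathcal{R}$. Then $A\cap I$ is outer measurable.
   Context: $\mathcal{R}$ denotes the Levi-Civita field: functions $x:\mathbb{Q}\to\mathbb{R}$ with left-finite support, with componentwise addition and formal power series multiplication, ordered by $x>0$ iff $x\ne0$ and $x[\min\operatorname{supp}x]>0$; it is a non-Archimedean ordered field extension of $\mathbb{R}$, Cauchy complete in the order topology, in which all limits and series are taken (a series $\sum a_n$ converges iff $a_n\to0$). An interval is a set $[a,b],[a,b),(a,b]$ or $(a,b)$ with $a<b$ in $\mathcal{R}$, of length $l=b-a$. A cover of $A\subseteq\mathcal{R}$ is a sequence of intervals $(S_n)_{n\ge1}$ with $A\subseteq\bigcup_n S_n$ and $\sum_n l(S_n)$ convergent in $\mathcal{R}$. $A$ is called outer measurable if the infimum $\inf\{\sum_n l(S_n): (S_n)\text{ a cover of }A\}$ exists in $\mathcal{R}$; this infimum is then called the outer measure $M_u(A)$. *)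

theory Defs
  imports Complex_Main
begin

text \<open>The Levi-Civita field: functions from the rationals to the reals with
left-finite support (for every q only finitely many support points are \<le> q).\<close>

typedef lc = "{x :: rat \<Rightarrow> real. \<forall>q. finite {r. r \<le> q \<and> x r \<noteq> 0}}"
  by (rule exI[of _ "\<lambda>_. 0"]) simp

definition lc_zero :: lc where
  "lc_zero = Abs_lc (\<lambda>_. 0)"

definition lc_add :: "lc \<Rightarrow> lc \<Rightarrow> lc" where
  "lc_add x y = Abs_lc (\<lambda>q. Rep_lc x q + Rep_lc y q)"

definition lc_diff :: "lc \<Rightarrow> lc \<Rightarrow> lc" where
  "lc_diff x y = Abs_lc (\<lambda>q. Rep_lc x q - Rep_lc y q)"

text \<open>Formal power series (Cauchy) product; the sum is finite for left-finite x, y.\<close>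
definition lc_mult :: "lc \<Rightarrow> lc \<Rightarrow> lc" where
  "lc_mult x y = Abs_lc (\<lambda>q. \<Sum>a\<in>{a. Rep_lc x a \<noteq> 0 \<and> Rep_lc y (q - a) \<noteq> 0}.
                               Rep_lc x a * Rep_lc y (q - a))"

definition lc_pos :: "lc \<Rightarrow> bool" where
  "lc_pos x \<longleftrightarrow> (\<exists>q. Rep_lc x q > 0 \<and> (\<forall>r<q. Rep_lc x r = 0))"

definition lc_less :: "lc \<Rightarrow> lc \<Rightarrow> bool" where
  "lc_less x y \<longleftrightarrow> lc_pos (lc_diff y x)"

definition lc_le :: "lc \<Rightarrow> lc \<Rightarrow> bool" where
  "lc_le x y \<longleftrightarrow> x = y \<or> lc_less x y"

primrec lc_psum :: "(nat \<Rightarrow> lc) \<Rightarrow> nat \<Rightarrow> lc" where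
  "lc_psum f 0 = lc_zero"
| "lc_psum f (Suc n) = lc_add (lc_psum f n) (f n)"

definition lc_sums :: "(nat \<Rightarrow> lc) \<Rightarrow> lc \<Rightarrow> bool" where
  "lc_sums f s \<longleftrightarrow> (\<forall>e. lc_pos e \<longrightarrow> (\<exists>N. \<forall>n\<ge>N.
      lc_less (lc_diff s (lc_psum f n)) e \<and> lc_less (lc_diff (lc_psum f n) s) e))"

definition lc_interval :: "lc \<Rightarrow> lc \<Rightarrow> bool \<Rightarrow> bool \<Rightarrow> lc set" where
  "lc_interval a b cl cr = {x. (if cl then lc_le a x else lc_less a x) \<and>
                               (if cr then lc_le x b else lc_less x b)}"

definition lc_is_interval :: "lc set \<Rightarrow> bool" where
  "lc_is_interval I \<longleftrightarrow> (\<exists>a b cl cr. lc_less a b \<and> I = lc_interval a b cl cr)"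

definition lc_cover_sum :: "lc set \<Rightarrow> lc \<Rightarrow> bool" where
  "lc_cover_sum A s \<longleftrightarrow> (\<exists>a b cl cr. (\<forall>n. lc_less (a n) (b n)) \<and>
      A \<subseteq> (\<Union>n. lc_interval (a n) (b n) (cl n) (cr n)) \<and>
      lc_sums (\<lambda>n. lc_diff (b n) (a n)) s)"

definition lc_is_inf :: "lc set \<Rightarrow> lc \<Rightarrow> bool" where
  "lc_is_inf S m \<longleftrightarrow> (\<forall>s\<in>S. lc_le m s) \<and> (\<forall>m'. (\<forall>s\<in>S. lc_le m' s) \<longrightarrow> lc_le m' m)"

definition outer_measurable :: "lc set \<Rightarrow> bool" where
  "outer_measurable A \<longleftrightarrow> (\<exists>m. lc_is_inf {s. lc_cover_sum A s} m)"

end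

theory Submission imports Defs begin

definition LF :: "(rat \<Rightarrow> real) \<Rightarrow> bool" where
  "LF f \<longleftrightarrow> (\<forall>q. finite {r. r \<le> q \<and> f r \<noteq> 0})"

lemma LF_Rep: "LF (Rep_lc x)" using Rep_lc unfolding LF_def by auto
lemma Rep_Abs: "LF f \<Longrightarrow> Rep_lc (Abs_lc f) = f" by (simp add: Abs_lc_inverse LF_def)

lemma LF_add: "LF f \<Longrightarrow> LF g \<Longrightarrow> LF (\<lambda>r. f r + g r)"
  unfolding LF_def
proof (intro allI)
  fix q assume "\<forall>q. finite {r. r \<le> q \<and> f r \<noteq> 0}" "\<forall>q. finite {r. r \<le> q \<and> g r \<noteq> 0}"
  then show "finite {r. r \<le> q \<and> f r + g r \<noteq> 0}"
    by (rule_tac finite_subset[of _ "{r. r\<le>q \<and> f r \<noteq> 0} \<union> {r. r\<le>q \<and> g r \<noteq> 0}"]) auto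
qed

lemma LF_diff: "LF f \<Longrightarrow> LF g \<Longrightarrow> LF (\<lambda>r. f r - g r)"
  unfolding LF_def
proof (intro allI)
  fix q assume "\<forall>q. finite {r. r \<le> q \<and> f r \<noteq> 0}" "\<forall>q. finite {r. r \<le> q \<and> g r \<noteq> 0}"
  then show "finite {r. r \<le> q \<and> f r - g r \<noteq> 0}"
    by (rule_tac finite_subset[of _ "{r. r\<le>q \<and> f r \<noteq> 0} \<union> {r. r\<le>q \<and> g r \<noteq> 0}"]) auto
qed

lemma LF_zero: "LF (\<lambda>r. 0)" unfolding LF_def by simp

lemma Rep_lc_add: "Rep_lc (lc_add x y) = (\<lambda>q. Rep_lc x q + Rep_lc y q)"
  unfolding lc_add_def by (simp add: Rep_Abs LF_add LF_Rep)
lemma Rep_lc_diff: "Rep_lc (lc_diff x y) = (\<lambda>q. Rep_lc x q - Rep_lc y q)"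
  unfolding lc_diff_def by (simp add: Rep_Abs LF_diff LF_Rep)
lemma Rep_lc_zero: "Rep_lc lc_zero = (\<lambda>q. 0)"
  unfolding lc_zero_def by (simp add: Rep_Abs LF_zero)

definition posf :: "(rat \<Rightarrow> real) \<Rightarrow> bool" where
  "posf f \<longleftrightarrow> (\<exists>q. f q > 0 \<and> (\<forall>r<q. f r = 0))"

lemma lc_pos_posf: "lc_pos x = posf (Rep_lc x)" unfolding lc_pos_def posf_def ..

lemma lc_less_posf: "lc_less x y = posf (\<lambda>q. Rep_lc y q - Rep_lc x q)"
  unfolding lc_less_def lc_pos_posf Rep_lc_diff ..

lemma lead_ex:
  assumes "LF f" "f r0 \<noteq> 0"
  shows "\<exists>p\<le>r0. f p \<noteq> 0 \<and> (\<forall>r<p. f r = 0)"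
proof -
  let ?S = "{r. r \<le> r0 \<and> f r \<noteq> 0}"
  have fin: "finite ?S" using assms(1) unfolding LF_def by blast
  have ne: "r0 \<in> ?S" using assms(2) by simp
  define p where "p = Min ?S"
  have pS: "p \<in> ?S" unfolding p_def by (rule Min_in[OF fin]) (use ne in blast)
  have "\<forall>r<p. f r = 0"
  proof (intro allI impI)
    fix r assume "r < p"
    show "f r = 0"
    proof (rule ccontr)
      assume "f r \<noteq> 0"
      then have "r \<in> ?S" using \<open>r < p\<close> pS by auto
      then have "p \<le> r" unfolding p_def using fin by simp
      then show False using \<open>r < p\<close> by simp
    qed
  qed
  then show ?thesis using pS by auto
qed

lemma posf_add: "posf f \<Longrightarrow> posf g \<Longrightarrow> posf (\<lambda>r. f r + g r)"
  unfolding posf_def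
proof -
  assume "\<exists>q. 0 < f q \<and> (\<forall>r<q. f r = 0)" "\<exists>q. 0 < g q \<and> (\<forall>r<q. g r = 0)"
  then obtain q1 q2 where 1: "0 < f q1" "\<forall>r<q1. f r = 0" and 2: "0 < g q2" "\<forall>r<q2. g r = 0" by blast
  show "\<exists>q. 0 < f q + g q \<and> (\<forall>r<q. f r + g r = 0)"
  proof (cases q1 q2 rule: linorder_cases)
    case less then show ?thesis using 1 2 by (intro exI[of _ q1]) auto
  next
    case equal then show ?thesis using 1 2 by (intro exI[of _ q1]) auto
  next
    case greater then show ?thesis using 1 2 by (intro exI[of _ q2]) auto
  qed
qed

lemma posf_neg: "posf f \<Longrightarrow> posf (\<lambda>r. - f r) \<Longrightarrow> False"
  unfolding posf_def
proof -
  assume "\<exists>q. 0 < f q \<and> (\<forall>r<q. f r = 0)" "\<exists>q. 0 < - f q \<and> (\<forall>r<q. - f r = 0)"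
  then obtain q1 q2 where 1: "0 < f q1" "\<forall>r<q1. f r = 0" and 2: "0 < - f q2" "\<forall>r<q2. - f r = 0" by blast
  show False
  proof (cases q1 q2 rule: linorder_cases)
    case less then show ?thesis using 1 2 by force
  next
    case equal then show ?thesis using 1 2 by auto
  next
    case greater then show ?thesis using 1 2 by force
  qed
qed

lemma posf_tri: "LF f \<Longrightarrow> f = (\<lambda>r. 0) \<or> posf f \<or> posf (\<lambda>r. - f r)"
proof -
  assume lf: "LF f"
  show ?thesis
  proof (cases "f = (\<lambda>r. 0)")
    case False
    then obtain r0 where "f r0 \<noteq> 0" by auto
    from lead_ex[OF lf this] obtain p where p: "f p \<noteq> 0" "\<forall>r<p. f r = 0" by blast
    then show ?thesis unfolding posf_def
      by (cases "f p > 0") (auto intro!: exI[of _ p])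
  qed simp
qed

lemma posf_zero: "\<not> posf (\<lambda>r. 0)" unfolding posf_def by simp

lemma lc_eq_iff: "x = y \<longleftrightarrow> (\<forall>q. Rep_lc x q = Rep_lc y q)"
  by (metis Rep_lc_inject ext)

instantiation lc :: linordered_ab_group_add
begin
definition zero_lc_def: "0 = lc_zero"
definition plus_lc_def: "x + y = lc_add x y"
definition minus_lc_def: "x - y = lc_diff x y"
definition uminus_lc_def: "- x = lc_diff lc_zero x"
definition less_lc_def: "x < y \<longleftrightarrow> lc_less x y"
definition less_eq_lc_def: "x \<le> y \<longleftrightarrow> lc_le x y"

lemma Rep_simps: "Rep_lc 0 = (\<lambda>q. 0)" "Rep_lc (x + y) = (\<lambda>q. Rep_lc x q + Rep_lc y q)"
  "Rep_lc (x - y) = (\<lambda>q. Rep_lc x q - Rep_lc y q)" "Rep_lc (- x) = (\<lambda>q. - Rep_lc x q)"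
  by (simp_all add: zero_lc_def plus_lc_def minus_lc_def uminus_lc_def Rep_lc_add Rep_lc_diff Rep_lc_zero)

lemma le_posf: "x \<le> y \<longleftrightarrow> x = y \<or> posf (\<lambda>q. Rep_lc y q - Rep_lc x q)"
  unfolding less_eq_lc_def lc_le_def lc_less_posf ..

lemma lt_posf: "x < y \<longleftrightarrow> posf (\<lambda>q. Rep_lc y q - Rep_lc x q)"
  unfolding less_lc_def lc_less_posf ..

instance
proof
  fix a b c :: lc
  show "a + b + c = a + (b + c)" by (simp add: lc_eq_iff Rep_simps)
  show "a + b = b + a" by (simp add: lc_eq_iff Rep_simps)
  show "0 + a = a" by (simp add: lc_eq_iff Rep_simps)
  show "- a + a = 0" by (simp add: lc_eq_iff Rep_simps)
  show "a - b = a + - b" by (simp add: lc_eq_iff Rep_simps)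
  show "a \<le> a" by (simp add: le_posf)
  show "a < b \<longleftrightarrow> a \<le> b \<and> \<not> b \<le> a"
  proof
    assume "a < b"
    then have p: "posf (\<lambda>q. Rep_lc b q - Rep_lc a q)" by (simp add: lt_posf)
    have "a \<noteq> b"
    proof
      assume "a = b" then show False using p posf_zero by simp
    qed
    moreover have "\<not> posf (\<lambda>q. Rep_lc a q - Rep_lc b q)"
    proof
      assume "posf (\<lambda>q. Rep_lc a q - Rep_lc b q)"
      then show False using posf_neg[OF p] by simp
    qed
    ultimately show "a \<le> b \<and> \<not> b \<le> a" using p unfolding le_posf by metis
  next
    assume "a \<le> b \<and> \<not> b \<le> a"
    then have "a \<noteq> b" "posf (\<lambda>q. Rep_lc b q - Rep_lc a q)" unfolding le_posf by metis+
    then show "a < b" unfolding lt_posf by blast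
  qed
  show "a \<le> b \<Longrightarrow> b \<le> c \<Longrightarrow> a \<le> c"
    using posf_add[of "\<lambda>q. Rep_lc b q - Rep_lc a q" "\<lambda>q. Rep_lc c q - Rep_lc b q"]
    by (auto simp: le_posf)
  show "a \<le> b \<Longrightarrow> b \<le> a \<Longrightarrow> a = b"
  proof -
    assume "a \<le> b" "b \<le> a"
    show "a = b"
    proof (rule ccontr)
      assume "a \<noteq> b"
      then have "posf (\<lambda>q. Rep_lc b q - Rep_lc a q)" "posf (\<lambda>q. Rep_lc a q - Rep_lc b q)"
        using \<open>a \<le> b\<close> \<open>b \<le> a\<close> by (auto simp: le_posf)
      then show False using posf_neg[of "\<lambda>q. Rep_lc b q - Rep_lc a q"] by simp
    qed
  qed
  show "a \<le> b \<Longrightarrow> c + a \<le> c + b"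
    by (auto simp: le_posf Rep_simps)
  show "a \<le> b \<or> b \<le> a"
  proof -
    have "(\<lambda>q. Rep_lc b q - Rep_lc a q) = (\<lambda>r. 0) \<or> posf (\<lambda>q. Rep_lc b q - Rep_lc a q) \<or>
       posf (\<lambda>r. - (Rep_lc b r - Rep_lc a r))"
      using posf_tri[OF LF_diff[OF LF_Rep[of b] LF_Rep[of a]]] .
    moreover have "(\<lambda>q. Rep_lc b q - Rep_lc a q) = (\<lambda>r. 0) \<Longrightarrow> a = b"
      by (simp add: lc_eq_iff fun_eq_iff)
    ultimately show ?thesis by (auto simp: le_posf)
  qed
qed
end


definition vb :: "rat \<Rightarrow> lc \<Rightarrow> bool" where "vb q x \<longleftrightarrow> (\<forall>r<q. Rep_lc x r = 0)"

lemma vb_add: "vb q x \<Longrightarrow> vb q y \<Longrightarrow> vb q (x + y)" by (simp add: vb_def Rep_simps)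
lemma vb_diff: "vb q x \<Longrightarrow> vb q y \<Longrightarrow> vb q (x - y)" by (simp add: vb_def Rep_simps)
lemma vb_uminus: "vb q x \<Longrightarrow> vb q (- x)" by (simp add: vb_def Rep_simps)
lemma vb_zero: "vb q 0" by (simp add: vb_def Rep_simps)
lemma vb_mono: "vb q x \<Longrightarrow> p \<le> q \<Longrightarrow> vb p x" by (simp add: vb_def)
lemma vb_sum: "(\<forall>i\<in>A. vb q (f i)) \<Longrightarrow> vb q (sum f A)"
  by (induct A rule: infinite_finite_induct) (auto simp: vb_zero vb_add)
lemma vb_all_zero: "(\<forall>q. vb q x) \<Longrightarrow> x = 0"
proof -
  assume h: "\<forall>q. vb q x"
  have "Rep_lc x r = 0" for r using h[rule_format, of "r+1"] by (simp add: vb_def)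
  then show "x = 0" by (simp add: lc_eq_iff Rep_simps)
qed

lemma nonneg_lead: "0 \<le> z \<Longrightarrow> (\<forall>r<p. Rep_lc z r = 0) \<Longrightarrow> Rep_lc z p \<ge> 0"
proof -
  assume "0 \<le> z" and v: "\<forall>r<p. Rep_lc z r = 0"
  then consider "z = 0" | "posf (\<lambda>q. Rep_lc z q - Rep_lc 0 q)" unfolding le_posf by auto
  then show ?thesis
  proof cases
    case 1 then show ?thesis by (simp add: Rep_simps)
  next
    case 2
    then obtain q where q: "Rep_lc z q > 0" "\<forall>r<q. Rep_lc z r = 0"
      by (auto simp: posf_def Rep_simps)
    show ?thesis
    proof (cases q p rule: linorder_cases)
      case less then show ?thesis using q v by force
    next
      case equal then show ?thesis using q by simp
    next
      case greater then show ?thesis using q by simp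
    qed
  qed
qed

lemma pos_lead: "(\<forall>r<p. Rep_lc z r = 0) \<Longrightarrow> Rep_lc z p > 0 \<Longrightarrow> 0 < z"
  unfolding lt_posf posf_def by (auto simp: Rep_simps)

lemma lead_lc: "Rep_lc y r0 \<noteq> 0 \<Longrightarrow> \<exists>p\<le>r0. Rep_lc y p \<noteq> 0 \<and> (\<forall>r<p. Rep_lc y r = 0)"
  using lead_ex[OF LF_Rep] by blast

lemma sandwich:
  fixes y D D' :: lc
  assumes "y \<le> D" "- D' \<le> y" "vb q D" "vb q D'"
  shows "vb q y"
  unfolding vb_def
proof (intro allI impI)
  fix r assume "r < q"
  show "Rep_lc y r = 0"
  proof (rule ccontr)
    assume "Rep_lc y r \<noteq> 0"
    from lead_lc[OF this] obtain p where p: "p \<le> r" "Rep_lc y p \<noteq> 0" "\<forall>r<p. Rep_lc y r = 0" by blast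
    have pq: "p < q" using p(1) \<open>r < q\<close> by simp
    have "0 \<le> D - y" using assms(1) by simp
    moreover have "\<forall>r'<p. Rep_lc (D - y) r' = 0" using p(3) assms(3) pq by (simp add: Rep_simps vb_def)
    ultimately have 1: "Rep_lc (D - y) p \<ge> 0" by (rule nonneg_lead)
    have "- D' + D' \<le> y + D'" using add_right_mono[OF assms(2), of D'] .
    then have "0 \<le> y + D'" by simp
    moreover have "\<forall>r'<p. Rep_lc (y + D') r' = 0" using p(3) assms(4) pq by (simp add: Rep_simps vb_def)
    ultimately have 2: "Rep_lc (y + D') p \<ge> 0" by (rule nonneg_lead)
    have "Rep_lc D p = 0" "Rep_lc D' p = 0" using assms(3,4) pq by (auto simp: vb_def)
    then show False using 1 2 p(2) by (simp add: Rep_simps)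
  qed
qed

definition monom :: "rat \<Rightarrow> lc" where "monom q = Abs_lc (\<lambda>r. if r = q then 1 else 0)"

lemma Rep_monom: "Rep_lc (monom q) = (\<lambda>r. if r = q then 1 else 0)"
  unfolding monom_def
proof (rule Rep_Abs)
  show "LF (\<lambda>r. if r = q then 1 else 0)" unfolding LF_def
    by (intro allI, rule finite_subset[of _ "{q}"]) auto
qed

lemma monom_pos: "0 < monom q"
  by (rule pos_lead[of q]) (simp_all add: Rep_monom)

lemma vb_monom: "vb q (monom q)" by (simp add: vb_def Rep_monom)

lemma small_lt:
  fixes e :: lc
  assumes "0 < e"
  shows "\<exists>q. \<forall>y. vb q y \<longrightarrow> y < e \<and> - e < y"
proof -
  from assms obtain p where p: "Rep_lc e p > 0" "\<forall>r<p. Rep_lc e r = 0"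
    unfolding lt_posf posf_def by (auto simp: Rep_simps)
  have "y < e \<and> - e < y" if "vb (p+1) y" for y
  proof -
    have vy: "\<forall>r<p. Rep_lc y r = 0" "Rep_lc y p = 0" using that by (auto simp: vb_def)
    have "0 < e - y" by (rule pos_lead[of p]) (use p vy in \<open>simp_all add: Rep_simps\<close>)
    moreover have "0 < y + e" by (rule pos_lead[of p]) (use p vy in \<open>simp_all add: Rep_simps\<close>)
    moreover have "y + e = y - (- e)" by simp
    ultimately show ?thesis by (simp only: diff_gt_0_iff_gt)
  qed
  then show ?thesis by blast
qed

definition conv :: "(nat \<Rightarrow> lc) \<Rightarrow> lc \<Rightarrow> bool" where
  "conv x L \<longleftrightarrow> (\<forall>q. \<exists>N. \<forall>n\<ge>N. vb q (L - x n))"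

lemma lc_psum_sum: "lc_psum f n = (\<Sum>k<n. f k)"
  by (induct n) (simp_all add: zero_lc_def plus_lc_def)

lemma lc_pos_iff: "lc_pos e \<longleftrightarrow> 0 < e"
  unfolding lt_posf lc_pos_posf by (simp add: Rep_simps)

lemma lc_sums_conv: "lc_sums f s \<longleftrightarrow> conv (\<lambda>n. \<Sum>k<n. f k) s"
proof -
  let ?P = "\<lambda>n. \<Sum>k<n. f k"
  have "lc_sums f s \<longleftrightarrow> (\<forall>e. 0 < e \<longrightarrow> (\<exists>N. \<forall>n\<ge>N. s - ?P n < e \<and> ?P n - s < e))"
    unfolding lc_sums_def lc_pos_iff lc_psum_sum less_lc_def[symmetric] minus_lc_def[symmetric] ..
  also have "\<dots> \<longleftrightarrow> conv ?P s"
  proof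
    assume h: "\<forall>e. 0 < e \<longrightarrow> (\<exists>N. \<forall>n\<ge>N. s - ?P n < e \<and> ?P n - s < e)"
    show "conv ?P s" unfolding conv_def
    proof
      fix q
      obtain N where N: "\<forall>n\<ge>N. s - ?P n < monom q \<and> ?P n - s < monom q"
        using h monom_pos by blast
      have "vb q (s - ?P n)" if "n \<ge> N" for n
      proof (rule sandwich[of _ "monom q" "monom q"])
        show "s - ?P n \<le> monom q" using N that by (simp add: less_imp_le)
        have "?P n - s < monom q" using N that by simp
        then have "- monom q < - (?P n - s)" by (simp only: neg_less_iff_less)
        then show "- monom q \<le> s - ?P n" by simp
      qed (simp_all add: vb_monom)
      then show "\<exists>N. \<forall>n\<ge>N. vb q (s - ?P n)" by blast
    qed
  next
    assume c: "conv ?P s"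
    show "\<forall>e. 0 < e \<longrightarrow> (\<exists>N. \<forall>n\<ge>N. s - ?P n < e \<and> ?P n - s < e)"
    proof (intro allI impI)
      fix e :: lc assume "0 < e"
      from small_lt[OF this] obtain q where q: "\<forall>y. vb q y \<longrightarrow> y < e \<and> - e < y" by blast
      from c obtain N where N: "\<forall>n\<ge>N. vb q (s - ?P n)" unfolding conv_def by blast
      have "s - ?P n < e \<and> ?P n - s < e" if "n \<ge> N" for n
      proof -
        have "s - ?P n < e" "- e < s - ?P n" using q[rule_format, OF N[rule_format, OF that]] by auto
        moreover have "- (s - ?P n) < e" using \<open>- e < s - ?P n\<close> by (simp only: minus_less_iff)
        ultimately show ?thesis by simp
      qed
      then show "\<exists>N. \<forall>n\<ge>N. s - ?P n < e \<and> ?P n - s < e" by blast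
    qed
  qed
  finally show ?thesis .
qed


lemma conv_add: "conv x L \<Longrightarrow> conv y M \<Longrightarrow> conv (\<lambda>n. x n + y n) (L + M)"
  unfolding conv_def
proof (intro allI)
  fix q assume "\<forall>q. \<exists>N. \<forall>n\<ge>N. vb q (L - x n)" "\<forall>q. \<exists>N. \<forall>n\<ge>N. vb q (M - y n)"
  then obtain N1 N2 where "\<forall>n\<ge>N1. vb q (L - x n)" "\<forall>n\<ge>N2. vb q (M - y n)" by blast
  then have "\<forall>n\<ge>max N1 N2. vb q (L + M - (x n + y n))"
    using vb_add by (metis (no_types, lifting) add_diff_add max.boundedE)
  then show "\<exists>N. \<forall>n\<ge>N. vb q (L + M - (x n + y n))" by blast
qed

lemma conv_unique: "conv x L \<Longrightarrow> conv x M \<Longrightarrow> L = M"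
proof -
  assume a: "conv x L" "conv x M"
  have "vb q (L - M)" for q
  proof -
    obtain N1 N2 where "\<forall>n\<ge>N1. vb q (L - x n)" "\<forall>n\<ge>N2. vb q (M - x n)" using a unfolding conv_def by blast
    then have "vb q (L - x (max N1 N2))" "vb q (M - x (max N1 N2))" by auto
    from vb_diff[OF this] show ?thesis by simp
  qed
  then have "L - M = 0" by (intro vb_all_zero) blast
  then show ?thesis by simp
qed

lemma conv_ge:
  assumes "conv x L" "\<forall>n. c \<le> x n"
  shows "c \<le> L"
proof (rule ccontr)
  assume "\<not> c \<le> L"
  then have "0 < c - L" by simp
  then obtain p where p: "Rep_lc (c - L) p > 0" "\<forall>r<p. Rep_lc (c - L) r = 0"
    unfolding lt_posf posf_def by (auto simp: Rep_simps)
  obtain N where N: "vb (p+1) (L - x N)" using assms(1) unfolding conv_def by blast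
  have e: "x N - c = - ((L - x N) + (c - L))" by (simp add: algebra_simps)
  have "0 \<le> x N - c" using assms(2) by simp
  moreover have "\<forall>r<p. Rep_lc (x N - c) r = 0" using p(2) N unfolding e by (auto simp: vb_def Rep_simps)
  ultimately have "Rep_lc (x N - c) p \<ge> 0" by (rule nonneg_lead)
  moreover have "Rep_lc (L - x N) p = 0" using N by (simp add: vb_def)
  ultimately show False using p(1) unfolding e by (simp add: Rep_simps)
qed

lemma conv_uminus: "conv x L \<Longrightarrow> conv (\<lambda>n. - x n) (- L)"
  unfolding conv_def
proof (intro allI)
  fix q assume "\<forall>q. \<exists>N. \<forall>n\<ge>N. vb q (L - x n)"
  then obtain N where "\<forall>n\<ge>N. vb q (L - x n)" by blast
  then have "\<forall>n\<ge>N. vb q (- L - - x n)" using vb_uminus by fastforce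
  then show "\<exists>N. \<forall>n\<ge>N. vb q (- L - - x n)" by blast
qed

lemma conv_le:
  assumes "conv x L" "\<forall>n. x n \<le> c"
  shows "L \<le> c"
proof -
  have "- c \<le> - L" using conv_ge[OF conv_uminus[OF assms(1)], of "- c"] assms(2) by simp
  then show ?thesis by simp
qed

lemma conv_vb: "conv x L \<Longrightarrow> \<forall>n. vb q (x n) \<Longrightarrow> vb q L"
proof -
  assume "conv x L" "\<forall>n. vb q (x n)"
  then obtain N where "vb q (L - x N)" "vb q (x N)" unfolding conv_def by blast
  then have "vb q ((L - x N) + x N)" by (rule vb_add)
  then show "vb q L" by simp
qed

lemma cauchy_conv:
  assumes c: "\<forall>q. \<exists>N. \<forall>m\<ge>N. \<forall>n\<ge>N. vb q (x m - x n)"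
  shows "\<exists>L. conv x L"
proof -
  define M where "M k = (SOME N. \<forall>m\<ge>N. \<forall>n\<ge>N. vb (of_nat k) (x m - x n))" for k :: nat
  have M: "\<forall>m\<ge>M k. \<forall>n\<ge>M k. vb (of_nat k) (x m - x n)" for k
    unfolding M_def by (rule someI_ex) (use c in blast)
  define P where "P k = (\<Sum>i\<le>k. M i)" for k
  have PM: "M k \<le> P k" for k unfolding P_def by (rule member_le_sum) auto
  have Pmono: "P k \<le> P k'" if "k \<le> k'" for k k' unfolding P_def by (rule sum_mono2) (use that in auto)
  define K where "K r = nat \<lceil>r\<rceil> + 1" for r :: rat
  have K: "r < of_nat (K r)" for r
  proof -
    have "r \<le> of_int \<lceil>r\<rceil>" by (rule le_of_int_ceiling)
    also have "\<dots> \<le> of_nat (nat \<lceil>r\<rceil>)" by simp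
    finally show ?thesis unfolding K_def by simp
  qed
  have Kmono: "K r \<le> K r'" if "r \<le> r'" for r r'
    unfolding K_def using that by (simp add: ceiling_mono nat_mono)
  define Lf where "Lf r = Rep_lc (x (P (K r))) r" for r
  have stab: "Rep_lc (x n) r = Lf r" if "n \<ge> P (K r)" for n r
  proof -
    have "vb (of_nat (K r)) (x n - x (P (K r)))" using M[of "K r"] PM[of "K r"] that by auto
    then show ?thesis using K[of r] unfolding Lf_def by (simp add: vb_def Rep_simps)
  qed
  have "LF Lf" unfolding LF_def
  proof
    fix q
    have "{r. r \<le> q \<and> Lf r \<noteq> 0} \<subseteq> {r. r \<le> q \<and> Rep_lc (x (P (K q))) r \<noteq> 0}"
    proof
      fix r assume "r \<in> {r. r \<le> q \<and> Lf r \<noteq> 0}"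
      then have "r \<le> q" "Lf r \<noteq> 0" by auto
      moreover have "Rep_lc (x (P (K q))) r = Lf r" by (rule stab) (use Pmono Kmono \<open>r \<le> q\<close> in auto)
      ultimately show "r \<in> {r. r \<le> q \<and> Rep_lc (x (P (K q))) r \<noteq> 0}" by simp
    qed
    moreover have "finite {r. r \<le> q \<and> Rep_lc (x (P (K q))) r \<noteq> 0}" using LF_Rep unfolding LF_def by blast
    ultimately show "finite {r. r \<le> q \<and> Lf r \<noteq> 0}" by (rule finite_subset)
  qed
  define L where "L = Abs_lc Lf"
  have RL: "Rep_lc L = Lf" unfolding L_def by (rule Rep_Abs) fact
  have "conv x L" unfolding conv_def
  proof
    fix q
    have "vb q (L - x n)" if "n \<ge> P (K q)" for n
      unfolding vb_def
    proof (intro allI impI)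
      fix r assume "r < q"
      have "P (K r) \<le> n" using Pmono[OF Kmono[of r q]] \<open>r < q\<close> that by simp
      then show "Rep_lc (L - x n) r = 0" using stab by (simp add: Rep_simps RL)
    qed
    then show "\<exists>N. \<forall>n\<ge>N. vb q (L - x n)" by blast
  qed
  then show ?thesis by blast
qed

definition tendsz :: "(nat \<Rightarrow> lc) \<Rightarrow> bool" where
  "tendsz f \<longleftrightarrow> (\<forall>q. \<exists>N. \<forall>n\<ge>N. vb q (f n))"

lemma tendsz_sums: "tendsz f \<Longrightarrow> \<exists>s. lc_sums f s"
proof -
  assume t: "tendsz f"
  let ?P = "\<lambda>n. \<Sum>k<n. f k"
  have "\<forall>q. \<exists>N. \<forall>m\<ge>N. \<forall>n\<ge>N. vb q (?P m - ?P n)"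
  proof
    fix q
    obtain N where N: "\<forall>n\<ge>N. vb q (f n)" using t unfolding tendsz_def by blast
    have a: "vb q (?P m - ?P N)" if "m \<ge> N" for m
      using that
    proof (induct m rule: dec_induct)
      case base then show ?case by (simp add: vb_zero)
    next
      case (step m)
      have eq: "?P (Suc m) - ?P N = (?P m - ?P N) + f m" by (simp add: algebra_simps)
      have "vb q ((?P m - ?P N) + f m)" by (rule vb_add) (use step N in auto)
      then show ?case unfolding eq .
    qed
    have "vb q (?P m - ?P n)" if "m \<ge> N" "n \<ge> N" for m n
    proof -
      have "vb q ((?P m - ?P N) - (?P n - ?P N))" using a that vb_diff by blast
      then show ?thesis by simp
    qed
    then show "\<exists>N. \<forall>m\<ge>N. \<forall>n\<ge>N. vb q (?P m - ?P n)" by blast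
  qed
  from cauchy_conv[OF this] obtain s where "conv ?P s" by blast
  then show ?thesis unfolding lc_sums_conv by blast
qed

lemma sums_tendsz: "lc_sums f s \<Longrightarrow> tendsz f"
  unfolding tendsz_def lc_sums_conv conv_def
proof (intro allI)
  fix q assume "\<forall>q. \<exists>N. \<forall>n\<ge>N. vb q (s - (\<Sum>k<n. f k))"
  then obtain N where N: "\<forall>n\<ge>N. vb q (s - (\<Sum>k<n. f k))" by blast
  have "vb q (f n)" if "n \<ge> N" for n
  proof -
    have "vb q (s - (\<Sum>k<n. f k))" "vb q (s - (\<Sum>k<Suc n. f k))" using N that by (auto simp del: sum.lessThan_Suc)
    from vb_diff[OF this] show ?thesis by simp
  qed
  then show "\<exists>N. \<forall>n\<ge>N. vb q (f n)" by blast
qed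

lemma tendsz_bound: "tendsz T \<Longrightarrow> \<forall>n. 0 \<le> t n \<and> t n \<le> T n \<Longrightarrow> tendsz t"
  unfolding tendsz_def
proof (intro allI)
  fix q assume "\<forall>q. \<exists>N. \<forall>n\<ge>N. vb q (T n)" "\<forall>n. 0 \<le> t n \<and> t n \<le> T n"
  then obtain N where N: "\<forall>n\<ge>N. vb q (T n)" and b: "\<forall>n. 0 \<le> t n \<and> t n \<le> T n" by blast
  have "vb q (t n)" if "n \<ge> N" for n
    by (rule sandwich[of _ "T n" 0]) (use N b that in \<open>auto simp: vb_zero\<close>)
  then show "\<exists>N. \<forall>n\<ge>N. vb q (t n)" by blast
qed

lemma sums_add: "lc_sums f a \<Longrightarrow> lc_sums g b \<Longrightarrow> lc_sums (\<lambda>n. f n + g n) (a + b)"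
  unfolding lc_sums_conv sum.distrib by (rule conv_add)

lemma sums_unique: "lc_sums f a \<Longrightarrow> lc_sums f b \<Longrightarrow> a = b"
  unfolding lc_sums_conv by (rule conv_unique)

lemma psum_interleave:
  fixes n :: nat
  shows "(\<Sum>k<n. (if even k then f (k div 2) else g (k div 2)) :: lc) =
    (\<Sum>k<(n+1) div 2. f k) + (\<Sum>k<n div 2. g k)"
proof (induct n)
  case 0 then show ?case by simp
next
  case (Suc n)
  show ?case
  proof (cases "even n")
    case True
    then obtain k where k: "n = 2 * k" by (elim evenE)
    have "(Suc n + 1) div 2 = Suc k" "(n + 1) div 2 = k" "n div 2 = k" "Suc n div 2 = k" using k by auto
    then show ?thesis using Suc True by (simp add: algebra_simps)
  next
    case False
    then obtain k where k: "n = 2 * k + 1" by (elim oddE)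
    have "(Suc n + 1) div 2 = Suc k" "(n + 1) div 2 = Suc k" "n div 2 = k" "Suc n div 2 = Suc k" using k by auto
    then show ?thesis using Suc False by (simp add: algebra_simps)
  qed
qed

lemma sums_interleave:
  assumes "lc_sums f a" "lc_sums g b"
  shows "lc_sums (\<lambda>n. if even n then f (n div 2) else g (n div 2)) (a + b)"
  unfolding lc_sums_conv psum_interleave conv_def
proof
  fix q
  obtain N1 N2 where N1: "\<forall>n\<ge>N1. vb q (a - (\<Sum>k<n. f k))" and N2: "\<forall>n\<ge>N2. vb q (b - (\<Sum>k<n. g k))"
    using assms unfolding lc_sums_conv conv_def by blast
  have "vb q (a + b - ((\<Sum>k<(n+1) div 2. f k) + (\<Sum>k<n div 2. g k)))" if "n \<ge> 2 * (N1 + N2)" for n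
  proof -
    have "(n+1) div 2 \<ge> N1" "n div 2 \<ge> N2" using that by auto
    then have "vb q ((a - (\<Sum>k<(n+1) div 2. f k)) + (b - (\<Sum>k<n div 2. g k)))" using N1 N2 vb_add by blast
    then show ?thesis by (simp add: algebra_simps)
  qed
  then show "\<exists>N. \<forall>n\<ge>N. vb q (a + b - ((\<Sum>k<(n+1) div 2. f k) + (\<Sum>k<n div 2. g k)))" by blast
qed


lemma three_pieces:
  fixes a b \<alpha> \<beta> :: "'a::linordered_ab_group_add"
  assumes ab: "a \<le> b" and al: "\<alpha> \<le> \<beta>"
  shows "(max (min b \<beta>) (max a \<alpha>) - max a \<alpha>) + (max (min b \<alpha>) a - a) + (b - min (max a \<beta>) b) = b - a"
proof -
  consider "\<alpha> \<le> a" "\<beta> \<le> a" | "\<alpha> \<le> a" "a < \<beta>" "\<beta> \<le> b" | "\<alpha> \<le> a" "b < \<beta>"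
    | "a < \<alpha>" "\<alpha> \<le> b" "\<beta> \<le> b" | "a < \<alpha>" "\<alpha> \<le> b" "b < \<beta>" | "b < \<alpha>" by fastforce
  then show ?thesis
  proof cases
    case 1
    have "max a \<alpha> = a" "min b \<beta> = \<beta>" "max \<beta> a = a" "min b \<alpha> = \<alpha>" "max \<alpha> a = a"
      "max a \<beta> = a" "min a b = a" using 1 ab order_trans[OF 1(2) ab] order_trans[OF 1(1) ab] by (simp_all add: max_def min_def)
    then show ?thesis by (simp add: algebra_simps)
  next
    case 2
    have "max a \<alpha> = a" "min b \<beta> = \<beta>" "max \<beta> a = \<beta>" "min b \<alpha> = \<alpha>" "max \<alpha> a = a"
      "max a \<beta> = \<beta>" "min \<beta> b = \<beta>" using 2 ab order_trans[OF 2(1) ab] less_imp_le[OF 2(2)] by (simp_all add: max_def min_def)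
    then show ?thesis by (simp add: algebra_simps)
  next
    case 3
    have "max a \<alpha> = a" "min b \<beta> = b" "max b a = b" "min b \<alpha> = \<alpha>" "max \<alpha> a = a"
      "max a \<beta> = \<beta>" "min \<beta> b = b" using 3 ab order_trans[OF 3(1) ab] less_imp_le[OF 3(2)] order_trans[OF ab less_imp_le[OF 3(2)]] by (simp_all add: max_def min_def)
    then show ?thesis by (simp add: algebra_simps)
  next
    case 4
    have "max a \<alpha> = \<alpha>" "min b \<beta> = \<beta>" "max \<beta> \<alpha> = \<beta>" "min b \<alpha> = \<alpha>" "max \<alpha> a = \<alpha>"
      "max a \<beta> = \<beta>" "min \<beta> b = \<beta>" using 4 ab al order.strict_trans2[OF 4(1) al] less_imp_le[OF 4(1)] less_imp_le[OF order.strict_trans2[OF 4(1) al]] by (simp_all add: max_def min_def)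
    then show ?thesis by (simp add: algebra_simps)
  next
    case 5
    have "max a \<alpha> = \<alpha>" "min b \<beta> = b" "max b \<alpha> = b" "min b \<alpha> = \<alpha>" "max \<alpha> a = \<alpha>"
      "max a \<beta> = \<beta>" "min \<beta> b = b" using 5 ab al order.strict_trans2[OF 5(1) al] less_imp_le[OF 5(1)] less_imp_le[OF 5(3)] order_trans[OF ab less_imp_le[OF 5(3)]] by (simp_all add: max_def min_def)
    then show ?thesis by (simp add: algebra_simps)
  next
    case 6
    have "max a \<alpha> = \<alpha>" "min b \<beta> = b" "max b \<alpha> = \<alpha>" "min b \<alpha> = b" "max b a = b"
      "max a \<beta> = \<beta>" "min \<beta> b = b" using 6 ab al less_imp_le[OF 6] order_trans[OF less_imp_le[OF 6] al] order_trans[OF ab order_trans[OF less_imp_le[OF 6] al]] order_trans[OF ab less_imp_le[OF 6]] by (simp_all add: max_def min_def)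
    then show ?thesis by (simp add: algebra_simps)
  qed
qed


lemma lc_le_eq: "lc_le x y \<longleftrightarrow> x \<le> y" by (simp add: less_eq_lc_def)
lemma lc_less_eq: "lc_less x y \<longleftrightarrow> x < y" by (simp add: less_lc_def)
lemma lc_diff_eq: "lc_diff x y = x - y" by (simp add: minus_lc_def)

lemma mem_interval: "x \<in> lc_interval a b cl cr \<Longrightarrow> a \<le> x \<and> x \<le> b"
  by (auto simp: lc_interval_def lc_le_eq lc_less_eq split: if_splits)

lemma interval_open_sub: "a < x \<Longrightarrow> x < b \<Longrightarrow> x \<in> lc_interval a b cl cr"
  by (auto simp: lc_interval_def lc_le_eq lc_less_eq)

lemma closed_interval: "lc_interval a b True True = {x. a \<le> x \<and> x \<le> b}"
  by (auto simp: lc_interval_def lc_le_eq)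

lemma cover_def': "lc_cover_sum X s \<longleftrightarrow> (\<exists>a b cl cr. (\<forall>n. a n < b n) \<and>
      X \<subseteq> (\<Union>n. lc_interval (a n) (b n) (cl n) (cr n)) \<and> lc_sums (\<lambda>n. b n - a n) s)"
  unfolding lc_cover_sum_def lc_less_eq lc_diff_eq ..

lemma closed_cover:
  assumes "\<forall>n. a n < b n" "X \<subseteq> (\<Union>n. {x. a n \<le> x \<and> x \<le> b n})" "lc_sums (\<lambda>n. b n - a n) s"
  shows "lc_cover_sum X s"
  unfolding cover_def'
  by (rule exI[of _ a], rule exI[of _ b], rule exI[of _ "\<lambda>n. True"], rule exI[of _ "\<lambda>n. True"])
    (use assms in \<open>simp add: closed_interval\<close>)

lemma cover_mono: "X \<subseteq> Y \<Longrightarrow> lc_cover_sum Y s \<Longrightarrow> lc_cover_sum X s"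
  unfolding lc_cover_sum_def by blast

lemma cover_union:
  assumes "lc_cover_sum X u" "lc_cover_sum Y v"
  shows "lc_cover_sum (X \<union> Y) (u + v)"
proof -
  obtain a b cl cr where 1: "\<forall>n. a n < b n" "X \<subseteq> (\<Union>n. lc_interval (a n) (b n) (cl n) (cr n))"
    "lc_sums (\<lambda>n. b n - a n) u" using assms(1) unfolding cover_def' by blast
  obtain a' b' cl' cr' where 2: "\<forall>n. a' n < b' n" "Y \<subseteq> (\<Union>n. lc_interval (a' n) (b' n) (cl' n) (cr' n))"
    "lc_sums (\<lambda>n. b' n - a' n) v" using assms(2) unfolding cover_def' by blast
  define A where "A n = (if even n then a (n div 2) else a' (n div 2))" for n
  define B where "B n = (if even n then b (n div 2) else b' (n div 2))" for n
  define CL where "CL n = (if even n then cl (n div 2) else cl' (n div 2))" for n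
  define CR where "CR n = (if even n then cr (n div 2) else cr' (n div 2))" for n
  have "\<forall>n. A n < B n" using 1(1) 2(1) by (simp add: A_def B_def)
  moreover have "X \<union> Y \<subseteq> (\<Union>n. lc_interval (A n) (B n) (CL n) (CR n))"
  proof
    fix x assume "x \<in> X \<union> Y"
    then show "x \<in> (\<Union>n. lc_interval (A n) (B n) (CL n) (CR n))"
    proof
      assume "x \<in> X"
      then obtain n where "x \<in> lc_interval (a n) (b n) (cl n) (cr n)" using 1(2) by blast
      then have "x \<in> lc_interval (A (2*n)) (B (2*n)) (CL (2*n)) (CR (2*n))"
        by (simp add: A_def B_def CL_def CR_def)
      then show ?thesis by blast
    next
      assume "x \<in> Y"
      then obtain n where "x \<in> lc_interval (a' n) (b' n) (cl' n) (cr' n)" using 2(2) by blast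
      then have "x \<in> lc_interval (A (2*n+1)) (B (2*n+1)) (CL (2*n+1)) (CR (2*n+1))"
        by (simp add: A_def B_def CL_def CR_def)
      then show ?thesis by blast
    qed
  qed
  moreover have "lc_sums (\<lambda>n. B n - A n) (u + v)"
  proof -
    have "(\<lambda>n. B n - A n) = (\<lambda>n. if even n then (\<lambda>n. b n - a n) (n div 2) else (\<lambda>n. b' n - a' n) (n div 2))"
      by (auto simp: A_def B_def)
    then show ?thesis using sums_interleave[OF 1(3) 2(3)] by simp
  qed
  ultimately show ?thesis unfolding cover_def' by blast
qed


lemma delta_seq: "\<exists>D. lc_sums (\<lambda>n. monom (j + 1 + of_nat n)) D \<and> vb j (D + D + D)"
proof -
  let ?d = "\<lambda>n. monom (j + 1 + of_nat n)"
  have t: "tendsz ?d" unfolding tendsz_def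
  proof
    fix q
    have "vb q (?d n)" if "n \<ge> nat \<lceil>q - j\<rceil>" for n
    proof (rule vb_mono[OF vb_monom])
      have "q - j \<le> of_int \<lceil>q - j\<rceil>" by (rule le_of_int_ceiling)
      also have "\<dots> \<le> of_nat (nat \<lceil>q - j\<rceil>)" by simp
      also have "\<dots> \<le> of_nat n" using that by simp
      finally show "q \<le> j + 1 + of_nat n" by simp
    qed
    then show "\<exists>N. \<forall>n\<ge>N. vb q (?d n)" by blast
  qed
  from tendsz_sums[OF t] obtain D where D: "lc_sums ?d D" by blast
  have "vb (j+1) D"
  proof (rule conv_vb)
    show "conv (\<lambda>n. \<Sum>k<n. ?d k) D" using D by (simp add: lc_sums_conv)
    show "\<forall>n. vb (j+1) (\<Sum>k<n. ?d k)" by (auto intro!: vb_sum vb_mono[OF vb_monom])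
  qed
  then have "vb j D" by (rule vb_mono) simp
  then have "vb j (D + D + D)" by (intro vb_add)
  then show ?thesis using D by blast
qed

lemma le_plus_pos: "x \<le> y \<Longrightarrow> 0 < d \<Longrightarrow> x \<le> y + (d::lc)"
  using add_mono[of x y 0 d] by simp

lemma minus_pos_le: "y \<le> x \<Longrightarrow> 0 < d \<Longrightarrow> y - d \<le> (x::lc)"
proof -
  assume "y \<le> x" "0 < d"
  have "y - d \<le> y" using \<open>0 < d\<close> by simp
  then show ?thesis using \<open>y \<le> x\<close> by (rule order_trans)
qed

lemma split_cover:
  assumes cov: "lc_cover_sum A s" and ab: "\<alpha> < \<beta>" and I: "I = lc_interval \<alpha> \<beta> cI dI"
  shows "\<exists>v u. lc_cover_sum (A \<inter> I) v \<and> lc_cover_sum (A - I) u \<and> vb j (v + u - s)"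
proof -
  obtain a b cl cr where c: "\<forall>n. a n < b n" "A \<subseteq> (\<Union>n. lc_interval (a n) (b n) (cl n) (cr n))"
    "lc_sums (\<lambda>n. b n - a n) s"
    using cov unfolding cover_def' by blast
  obtain D where D: "lc_sums (\<lambda>n. monom (j + 1 + of_nat n)) D" "vb j (D + D + D)" using delta_seq by blast
  define \<delta> where "\<delta> n = monom (j + 1 + of_nat n)" for n
  have dpos: "0 < \<delta> n" for n by (simp add: \<delta>_def monom_pos)
  define lo where "lo n = max (a n) \<alpha>" for n
  define hi where "hi n = max (min (b n) \<beta>) (lo n) + \<delta> n" for n
  define bl where "bl n = max (min (b n) \<alpha>) (a n) + \<delta> n" for n
  define ar where "ar n = min (max (a n) \<beta>) (b n) - \<delta> n" for n
  define T where "T n = (b n - a n) + \<delta> n + \<delta> n + \<delta> n" for n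
  have ident: "(hi n - lo n) + (bl n - a n) + (b n - ar n) = T n" for n
  proof -
    have e1: "(max (min (b n) \<beta>) (max (a n) \<alpha>) - max (a n) \<alpha>) + (max (min (b n) \<alpha>) (a n) - a n)
        + (b n - min (max (a n) \<beta>) (b n)) = b n - a n"
      by (rule three_pieces) (use c(1) ab in \<open>auto intro: less_imp_le\<close>)
    have e2: "(hi n - lo n) + (bl n - a n) + (b n - ar n) =
        ((max (min (b n) \<beta>) (max (a n) \<alpha>) - max (a n) \<alpha>) + (max (min (b n) \<alpha>) (a n) - a n)
        + (b n - min (max (a n) \<beta>) (b n))) + \<delta> n + \<delta> n + \<delta> n"
      unfolding hi_def lo_def bl_def ar_def by (simp add: algebra_simps)
    show ?thesis unfolding e2 e1 T_def ..
  qed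
  have p1: "lo n < hi n" for n
  proof -
    have "lo n + 0 < max (min (b n) \<beta>) (lo n) + \<delta> n" by (rule add_le_less_mono) (simp_all add: dpos)
    then show ?thesis by (simp add: hi_def)
  qed
  have p2: "a n < bl n" for n
  proof -
    have "a n + 0 < max (min (b n) \<alpha>) (a n) + \<delta> n" by (rule add_le_less_mono) (simp_all add: dpos)
    then show ?thesis by (simp add: bl_def)
  qed
  have p3: "ar n < b n" for n
  proof -
    have "min (max (a n) \<beta>) (b n) - \<delta> n < min (max (a n) \<beta>) (b n) - 0"
      by (rule diff_strict_left_mono) (simp add: dpos)
    also have "\<dots> \<le> b n" by simp
    finally show ?thesis by (simp add: ar_def)
  qed
  have sT: "lc_sums T (s + D + D + D)"
    unfolding T_def \<delta>_def by (intro sums_add c(3) D(1))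
  have tT: "tendsz T" by (rule sums_tendsz[OF sT])
  have b1: "0 \<le> hi n - lo n \<and> hi n - lo n \<le> T n" for n
  proof -
    have "(hi n - lo n) + 0 + 0 \<le> (hi n - lo n) + (bl n - a n) + (b n - ar n)"
      using p2[of n] p3[of n] by (intro add_mono) auto
    then show ?thesis using p1[of n] ident[of n] by simp
  qed
  have b2: "0 \<le> bl n - a n \<and> bl n - a n \<le> T n" for n
  proof -
    have "0 + (bl n - a n) + 0 \<le> (hi n - lo n) + (bl n - a n) + (b n - ar n)"
      using p1[of n] p3[of n] by (intro add_mono) auto
    then show ?thesis using p2[of n] ident[of n] by simp
  qed
  have b3: "0 \<le> b n - ar n \<and> b n - ar n \<le> T n" for n
  proof -
    have "0 + 0 + (b n - ar n) \<le> (hi n - lo n) + (bl n - a n) + (b n - ar n)"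
      using p1[of n] p2[of n] by (intro add_mono) auto
    then show ?thesis using p3[of n] ident[of n] by simp
  qed
  obtain v where v: "lc_sums (\<lambda>n. hi n - lo n) v" using tendsz_sums[OF tendsz_bound[OF tT allI[OF b1]]] by blast
  obtain u1 where u1: "lc_sums (\<lambda>n. bl n - a n) u1" using tendsz_sums[OF tendsz_bound[OF tT allI[OF b2]]] by blast
  obtain u2 where u2: "lc_sums (\<lambda>n. b n - ar n) u2" using tendsz_sums[OF tendsz_bound[OF tT allI[OF b3]]] by blast
  have "lc_sums (\<lambda>n. (hi n - lo n) + (bl n - a n) + (b n - ar n)) (v + u1 + u2)"
    by (intro sums_add v u1 u2)
  then have "lc_sums T (v + u1 + u2)" unfolding ident .
  then have eq: "v + u1 + u2 = s + D + D + D" using sT by (rule sums_unique)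
  have cI: "lc_cover_sum (A \<inter> I) v"
  proof (rule closed_cover[OF _ _ v])
    show "\<forall>n. lo n < hi n" using p1 by blast
    show "A \<inter> I \<subseteq> (\<Union>n. {x. lo n \<le> x \<and> x \<le> hi n})"
    proof
      fix x assume x: "x \<in> A \<inter> I"
      then obtain n where "x \<in> lc_interval (a n) (b n) (cl n) (cr n)" using c(2) by blast
      then have 1: "a n \<le> x" "x \<le> b n" using mem_interval by blast+
      have 2: "\<alpha> \<le> x" "x \<le> \<beta>" using x I mem_interval by blast+
      have "lo n \<le> x" unfolding lo_def using 1 2 by simp
      moreover have "x \<le> hi n" unfolding hi_def
        by (rule le_plus_pos[OF _ dpos]) (use 1 2 in \<open>simp add: le_max_iff_disj\<close>)
      ultimately show "x \<in> (\<Union>n. {x. lo n \<le> x \<and> x \<le> hi n})" by blast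
    qed
  qed
  have cL: "lc_cover_sum {x \<in> A - I. x \<le> \<alpha>} u1"
  proof (rule closed_cover[OF _ _ u1])
    show "\<forall>n. a n < bl n" using p2 by blast
    show "{x \<in> A - I. x \<le> \<alpha>} \<subseteq> (\<Union>n. {x. a n \<le> x \<and> x \<le> bl n})"
    proof
      fix x assume x: "x \<in> {x \<in> A - I. x \<le> \<alpha>}"
      then obtain n where "x \<in> lc_interval (a n) (b n) (cl n) (cr n)" using c(2) by blast
      then have 1: "a n \<le> x" "x \<le> b n" using mem_interval by blast+
      have "x \<le> bl n" unfolding bl_def
        by (rule le_plus_pos[OF _ dpos]) (use 1 x in \<open>simp add: le_max_iff_disj\<close>)
      then show "x \<in> (\<Union>n. {x. a n \<le> x \<and> x \<le> bl n})" using 1 by blast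
    qed
  qed
  have cR: "lc_cover_sum {x \<in> A - I. \<beta> \<le> x} u2"
  proof (rule closed_cover[OF _ _ u2])
    show "\<forall>n. ar n < b n" using p3 by blast
    show "{x \<in> A - I. \<beta> \<le> x} \<subseteq> (\<Union>n. {x. ar n \<le> x \<and> x \<le> b n})"
    proof
      fix x assume x: "x \<in> {x \<in> A - I. \<beta> \<le> x}"
      then obtain n where "x \<in> lc_interval (a n) (b n) (cl n) (cr n)" using c(2) by blast
      then have 1: "a n \<le> x" "x \<le> b n" using mem_interval by blast+
      have "ar n \<le> x" unfolding ar_def
        by (rule minus_pos_le[OF _ dpos]) (use 1 x in \<open>simp add: min_le_iff_disj\<close>)
      then show "x \<in> (\<Union>n. {x. ar n \<le> x \<and> x \<le> b n})" using 1 by blast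
    qed
  qed
  have "A - I \<subseteq> {x \<in> A - I. x \<le> \<alpha>} \<union> {x \<in> A - I. \<beta> \<le> x}"
  proof
    fix x assume x: "x \<in> A - I"
    have "\<not> (\<alpha> < x \<and> x < \<beta>)" using x I interval_open_sub by blast
    then show "x \<in> {x \<in> A - I. x \<le> \<alpha>} \<union> {x \<in> A - I. \<beta> \<le> x}" using x by (auto simp: not_less)
  qed
  then have cO: "lc_cover_sum (A - I) (u1 + u2)" using cover_mono cover_union[OF cL cR] by blast
  have "v + (u1 + u2) - s = D + D + D" using eq by (simp add: algebra_simps)
  then have "vb j (v + (u1 + u2) - s)" using D(2) by simp
  then show ?thesis using cI cO by blast
qed


theorem proposition3p3:
  fixes A I :: "lc set"
  assumes "outer_measurable A"
    and "lc_is_interval I"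
  shows "outer_measurable (A \<inter> I)"
proof -
  obtain m where m: "lc_is_inf {s. lc_cover_sum A s} m" using assms(1) unfolding outer_measurable_def by blast
  then have mlb: "\<forall>s. lc_cover_sum A s \<longrightarrow> m \<le> s"
    and mgr: "\<forall>m'. (\<forall>s\<in>{s. lc_cover_sum A s}. m' \<le> s) \<longrightarrow> m' \<le> m"
    unfolding lc_is_inf_def lc_le_eq by auto
  obtain \<alpha> \<beta> cI dI where ab: "\<alpha> < \<beta>" and I: "I = lc_interval \<alpha> \<beta> cI dI"
    using assms(2) unfolding lc_is_interval_def lc_less_eq by blast
  have step: "\<exists>v t. lc_cover_sum (A \<inter> I) v \<and> (\<forall>v'. lc_cover_sum (A \<inter> I) v' \<longrightarrow> t \<le> v')
      \<and> vb (of_nat j) (v - t)" for j :: nat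
  proof -
    let ?e = "monom (of_nat j)"
    have "\<exists>s. lc_cover_sum A s \<and> s < m + ?e"
    proof (rule ccontr)
      assume "\<not> (\<exists>s. lc_cover_sum A s \<and> s < m + ?e)"
      then have "\<forall>s\<in>{s. lc_cover_sum A s}. m + ?e \<le> s" by (auto simp: not_less)
      then have "m + ?e \<le> m" using mgr by blast
      then show False using monom_pos[of "of_nat j"] by simp
    qed
    then obtain s where s: "lc_cover_sum A s" "s < m + ?e" by blast
    have sm: "vb (of_nat j) (s - m)"
    proof (rule sandwich[of _ ?e 0])
      show "s - m \<le> ?e" using s(2) by (simp add: diff_le_eq add.commute less_imp_le)
      show "- 0 \<le> s - m" using mlb s(1) by simp
    qed (simp_all add: vb_monom vb_zero)
    obtain v u where vu: "lc_cover_sum (A \<inter> I) v" "lc_cover_sum (A - I) u" "vb (of_nat j) (v + u - s)"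
      using split_cover[OF s(1) ab I] by blast
    have lb: "m - u \<le> v'" if "lc_cover_sum (A \<inter> I) v'" for v'
    proof -
      have "lc_cover_sum ((A \<inter> I) \<union> (A - I)) (v' + u)" by (rule cover_union[OF that vu(2)])
      then have "lc_cover_sum A (v' + u)" by (rule cover_mono[rotated]) auto
      then have "m \<le> v' + u" using mlb by blast
      then show ?thesis by (simp add: diff_le_eq)
    qed
    have e: "v - (m - u) = (v + u - s) + (s - m)" by (simp add: algebra_simps)
    have "vb (of_nat j) (v - (m - u))" unfolding e by (rule vb_add[OF vu(3) sm])
    then show ?thesis using vu(1) lb by blast
  qed
  then obtain V Tt where VT: "\<forall>j. lc_cover_sum (A \<inter> I) (V j) \<and> (\<forall>v'. lc_cover_sum (A \<inter> I) v' \<longrightarrow> Tt j \<le> v')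
      \<and> vb (of_nat j) (V j - Tt j)"
    by metis
  have vbmono: "vb q x" if "vb (of_nat j) x" "j \<ge> nat \<lceil>q\<rceil>" for j x q
  proof (rule vb_mono[OF that(1)])
    have "q \<le> of_int \<lceil>q\<rceil>" by (rule le_of_int_ceiling)
    also have "\<dots> \<le> of_nat (nat \<lceil>q\<rceil>)" by simp
    also have "\<dots> \<le> of_nat j" using that(2) by simp
    finally show "q \<le> of_nat j" .
  qed
  have "\<forall>q. \<exists>N. \<forall>m\<ge>N. \<forall>n\<ge>N. vb q (V m - V n)"
  proof
    fix q
    have "vb q (V m - V n)" if "m \<ge> nat \<lceil>q\<rceil>" "n \<ge> nat \<lceil>q\<rceil>" for m n
    proof (rule sandwich[of _ "V m - Tt m" "V n - Tt n"])
      have "Tt m \<le> V n" using VT by blast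
      then show "V m - V n \<le> V m - Tt m" by (rule diff_left_mono)
      have "Tt n \<le> V m" using VT by blast
      then show "- (V n - Tt n) \<le> V m - V n" by (simp add: algebra_simps)
      show "vb q (V m - Tt m)" using VT that vbmono by blast
      show "vb q (V n - Tt n)" using VT that vbmono by blast
    qed
    then show "\<exists>N. \<forall>m\<ge>N. \<forall>n\<ge>N. vb q (V m - V n)" by blast
  qed
  from cauchy_conv[OF this] obtain L where L: "conv V L" by blast
  have LT: "conv Tt L" unfolding conv_def
  proof
    fix q
    obtain N where N: "\<forall>n\<ge>N. vb q (L - V n)" using L unfolding conv_def by blast
    have "vb q (L - Tt n)" if "n \<ge> max N (nat \<lceil>q\<rceil>)" for n
    proof -
      have "vb q ((L - V n) + (V n - Tt n))"
      proof (rule vb_add)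
        show "vb q (L - V n)" using N that by simp
        show "vb q (V n - Tt n)" by (rule vbmono[of n]) (use VT that in auto)
      qed
      then show ?thesis by simp
    qed
    then show "\<exists>N. \<forall>n\<ge>N. vb q (L - Tt n)" by blast
  qed
  have "lc_is_inf {s. lc_cover_sum (A \<inter> I) s} L"
    unfolding lc_is_inf_def lc_le_eq
  proof (intro conjI allI impI ballI)
    fix s assume "s \<in> {s. lc_cover_sum (A \<inter> I) s}"
    then show "L \<le> s" using VT by (intro conv_le[OF LT]) auto
  next
    fix m' assume "\<forall>s\<in>{s. lc_cover_sum (A \<inter> I) s}. m' \<le> s"
    then show "m' \<le> L" using VT by (intro conv_ge[OF L]) auto
  qed
  then show ?thesis unfolding outer_measurable_def by blast
qed

end
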